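(* Let $D=(V,A)$ be a directed graph on $n$ vertices with distinct vertices $s,t$, let $M>0$, and let $\mathbf y:V\to\mathbb R$ satisfy $|\mathbf y(u)-\mathbf y(v)|\le M$ for all $u,v\in V$. Define the energy of an arc $(u,v)$ as $\mathcal E(u,v)=\int_{\mathbf y(v)-\mathbf y(u)}^{M}\frac{1}{\max\{x,0\}+1}\,dx$, and the total energy of $D$ as $\sum_{(u,v)\in A}\mathcal E(u,v)$. Let $D'$ be obtained from $D$ by reversing every arc of a simple directed path from $s$ to $t$ in $D$ (with $\mathbf y$ unchanged). Then the total energy of $D'$ exceeds the total energy of $D$ by at most $\mathbf y(t)-\mathbf y(s)+(n-1)\ln(M+1)$. *)

theory Defs
  imports "HOL-Analysis.Analysis"
begin

definition arc_energy :: "('a \<Rightarrow> real) \<Rightarrow> real \<Rightarrow> 'a \<times> 'a \<Rightarrow> real" where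
  "arc_energy y M e = integral {y (snd e) - y (fst e) .. M} (\<lambda>x. 1 / (max x 0 + 1))"

definition total_energy :: "('a \<Rightarrow> real) \<Rightarrow> real \<Rightarrow> ('a \<times> 'a) set \<Rightarrow> real" where
  "total_energy y M A = (\<Sum>e\<in>A. arc_energy y M e)"

definition is_simple_path :: "'a set \<Rightarrow> ('a \<times> 'a) set \<Rightarrow> 'a \<Rightarrow> 'a \<Rightarrow> 'a list \<Rightarrow> bool" where
  "is_simple_path V A s t p \<longleftrightarrow> p \<noteq> [] \<and> hd p = s \<and> last p = t \<and> distinct p \<and> set p \<subseteq> V
     \<and> (\<forall>i. Suc i < length p \<longrightarrow> (p ! i, p ! Suc i) \<in> A)"

definition path_arcs :: "'a list \<Rightarrow> ('a \<times> 'a) set" where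
  "path_arcs p = set (zip p (tl p))"

definition reverse_path :: "('a \<times> 'a) set \<Rightarrow> 'a list \<Rightarrow> ('a \<times> 'a) set" where
  "reverse_path A p = (A - path_arcs p) \<union> {(v, u) | u v. (u, v) \<in> path_arcs p}"

end

theory Submission
  imports Defs
begin

definition GG :: "real \<Rightarrow> real" where
  "GG x = min x 0 + ln (1 + max x 0)"

lemma GG_deriv:
  assumes "x \<noteq> 0"
  shows "(GG has_vector_derivative (1 / (max x 0 + 1))) (at x)"
proof (cases "x < 0")
  case True
  have "(GG has_field_derivative 1) (at x)"
  proof (rule has_field_derivative_transform_within_open[where f="\<lambda>x. x" and S="{..<0}"])
    show "((\<lambda>x. x) has_field_derivative 1) (at x)" by (rule DERIV_ident)
    show "open {..<(0::real)}" by simp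
    show "x \<in> {..<0}" using True by simp
    show "\<And>z. z \<in> {..<0} \<Longrightarrow> z = GG z" by (simp add: GG_def)
  qed
  then show ?thesis using True by (simp add: has_real_derivative_iff_has_vector_derivative)
next
  case False
  with assms have xp: "x > 0" by simp
  have "(GG has_field_derivative 1 / (1 + x)) (at x)"
  proof (rule has_field_derivative_transform_within_open[where f="\<lambda>x. ln (1 + x)" and S="{0<..}"])
    show "((\<lambda>x. ln (1 + x)) has_field_derivative 1 / (1 + x)) (at x)"
      using xp by (auto intro!: derivative_eq_intros)
    show "open {(0::real)<..}" by simp
    show "x \<in> {0<..}" using xp by simp
    show "\<And>z. z \<in> {0<..} \<Longrightarrow> ln (1 + z) = GG z" by (simp add: GG_def)
  qed
  then show ?thesis using xp by (simp add: has_real_derivative_iff_has_vector_derivative add.commute)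
qed

lemma GG_integral:
  assumes "a \<le> b"
  shows "integral {a..b} (\<lambda>x. 1 / (max x 0 + 1)) = GG b - GG a"
proof -
  have "((\<lambda>x. 1 / (max x 0 + 1)) has_integral GG b - GG a) {a..b}"
  proof (rule fundamental_theorem_of_calculus_interior_strong[where S="{0}"])
    show "finite {0::real}" by simp
    show "a \<le> b" by fact
    show "continuous_on {a..b} GG" unfolding GG_def
      by (intro continuous_intros) auto
    show "\<And>x. x \<in> {a<..<b} - {0} \<Longrightarrow> (GG has_vector_derivative 1 / (max x 0 + 1)) (at x)"
      using GG_deriv by auto
  qed
  then show ?thesis by (rule integral_unique)
qed

lemma GG_mono: "a \<le> b \<Longrightarrow> GG a \<le> GG b"
  unfolding GG_def by (intro add_mono) (auto simp: min_def max_def)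

lemma energy_formula:
  assumes "y v - y u \<le> M"
  shows "arc_energy y M (u, v) = GG M - GG (y v - y u)"
  unfolding arc_energy_def using GG_integral[OF assms] by simp

lemma energy_nonneg:
  assumes "y v - y u \<le> M"
  shows "arc_energy y M (u, v) \<ge> 0"
  using energy_formula[of y v u M, OF assms] GG_mono[of "y v - y u" M, OF assms] by simp

lemma energy_swap:
  assumes "\<bar>y v - y u\<bar> \<le> M" "M > 0"
  shows "arc_energy y M (v, u) - arc_energy y M (u, v) \<le> (y v - y u) + ln (1 + M)"
proof -
  define d where "d = y v - y u"
  have e1: "arc_energy y M (u, v) = GG M - GG d"
    using energy_formula[of y v u M] assms d_def by simp
  have e2: "arc_energy y M (v, u) = GG M - GG (- d)"
    using energy_formula[of y u v M] assms d_def by simp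
  have "GG d - GG (-d) \<le> d + ln (1 + M)"
  proof (cases "d \<ge> 0")
    case True
    then have "GG d = ln (1 + d)" "GG (-d) = -d" by (auto simp: GG_def)
    moreover have "ln (1 + d) \<le> ln (1 + M)" using True assms d_def by simp
    ultimately show ?thesis by simp
  next
    case False
    then have "GG d = d" "GG (-d) = ln (1 - d)" by (auto simp: GG_def)
    moreover have "ln (1 - d) \<ge> 0" using False by simp
    moreover have "ln (1 + M) \<ge> 0" using assms by simp
    ultimately show ?thesis by simp
  qed
  then show ?thesis using e1 e2 d_def by simp
qed

lemma telescope:
  "p \<noteq> [] \<Longrightarrow> sum_list (map (\<lambda>e. y (snd e) - y (fst e)) (zip p (tl p))) = (y (last p) - y (hd p) :: real)"
proof (induction p)
  case Nil then show ?case by simp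
next
  case (Cons a q)
  show ?case
  proof (cases q)
    case Nil then show ?thesis by simp
  next
    case (Cons b r)
    with Cons.IH show ?thesis by simp
  qed
qed

theorem lemma3p7:
  fixes V :: "'a set" and A :: "('a \<times> 'a) set" and s t :: 'a
    and y :: "'a \<Rightarrow> real" and M :: real and p :: "'a list"
  assumes "finite V" and "A \<subseteq> V \<times> V"
    and "s \<in> V" and "t \<in> V" and "s \<noteq> t"
    and "M > 0"
    and "\<And>u v. u \<in> V \<Longrightarrow> v \<in> V \<Longrightarrow> \<bar>y u - y v\<bar> \<le> M"
    and "is_simple_path V A s t p"
  shows "total_energy y M (reverse_path A p) - total_energy y M A
           \<le> y t - y s + (real (card V) - 1) * ln (M + 1)"
proof -
  note path = assms(8)[unfolded is_simple_path_def]
  define E where "E = arc_energy y M"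
  define P where "P = path_arcs p"
  define R where "R = prod.swap ` P"
  have R_eq: "{(v, u) | u v. (u, v) \<in> path_arcs p} = R"
    unfolding R_def P_def by force
  have finA: "finite A" using assms(1,2) finite_subset by blast
  have finP: "finite P" unfolding P_def path_arcs_def by simp
  have finR: "finite R" unfolding R_def using finP by simp
  have PA: "P \<subseteq> A"
  proof
    fix e assume "e \<in> P"
    then obtain i where "i < min (length p) (length (tl p))" "e = (p ! i, tl p ! i)"
      unfolding P_def path_arcs_def set_zip by auto
    then show "e \<in> A" using path by (auto simp: nth_tl)
  qed
  have PV: "P \<subseteq> V \<times> V" using PA assms(2) by blast
  have RV: "R \<subseteq> V \<times> V" using PV unfolding R_def by auto
  have Enn: "\<And>e. e \<in> V \<times> V \<Longrightarrow> E e \<ge> 0"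
  proof -
    fix e assume "e \<in> V \<times> V"
    then obtain u v where "e = (u, v)" "u \<in> V" "v \<in> V" by auto
    then show "E e \<ge> 0" unfolding E_def using assms(7)[of v u] energy_nonneg[of y v u M]
      by auto
  qed
  have "total_energy y M (reverse_path A p) = sum E ((A - P) \<union> R)"
    unfolding total_energy_def reverse_path_def R_eq E_def P_def ..
  also have "\<dots> = sum E (A - P) + sum E R - sum E ((A - P) \<inter> R)"
    using finA finR by (simp add: sum_Un)
  also have "\<dots> \<le> sum E (A - P) + sum E R"
  proof -
    have "sum E ((A - P) \<inter> R) \<ge> 0" using RV by (intro sum_nonneg Enn) auto
    then show ?thesis by simp
  qed
  finally have h1: "total_energy y M (reverse_path A p) \<le> sum E (A - P) + sum E R" .
  have h2: "total_energy y M A = sum E (A - P) + sum E P"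
    unfolding total_energy_def E_def using sum.subset_diff[OF PA finA] by simp
  have h3: "sum E R = sum (E \<circ> prod.swap) P"
    unfolding R_def by (rule sum.reindex) simp
  have "sum (E \<circ> prod.swap) P - sum E P = (\<Sum>e\<in>P. E (prod.swap e) - E e)"
    by (simp add: sum_subtractf)
  also have "\<dots> \<le> (\<Sum>e\<in>P. (y (snd e) - y (fst e)) + ln (1 + M))"
  proof (rule sum_mono)
    fix e assume "e \<in> P"
    then obtain u v where "e = (u, v)" "u \<in> V" "v \<in> V" using PV by auto
    then show "E (prod.swap e) - E e \<le> (y (snd e) - y (fst e)) + ln (1 + M)"
      unfolding E_def using energy_swap[of y v u M] assms(6) assms(7)[of v u] by simp
  qed
  also have "\<dots> = (\<Sum>e\<in>P. y (snd e) - y (fst e)) + real (card P) * ln (1 + M)"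
    by (simp add: sum.distrib)
  finally have h4: "sum (E \<circ> prod.swap) P - sum E P
     \<le> (\<Sum>e\<in>P. y (snd e) - y (fst e)) + real (card P) * ln (1 + M)" .
  have dz: "distinct (zip p (tl p))" using path by (simp add: distinct_zipI1)
  have "(\<Sum>e\<in>P. y (snd e) - y (fst e)) = sum_list (map (\<lambda>e. y (snd e) - y (fst e)) (zip p (tl p)))"
    unfolding P_def path_arcs_def using dz by (simp add: sum_list_distinct_conv_sum_set)
  also have "\<dots> = y t - y s" using telescope[of p y] path by simp
  finally have h5: "(\<Sum>e\<in>P. y (snd e) - y (fst e)) = y t - y s" .
  have cP: "card P = length p - 1"
    unfolding P_def path_arcs_def using dz by (simp add: distinct_card)
  have "length p \<le> card V"
    using path card_mono[OF assms(1), of "set p"] by (simp add: distinct_card)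
  moreover have "length p \<ge> 1" using path by (cases p) auto
  ultimately have cP2: "real (card P) \<le> real (card V) - 1" using cP by simp
  have lnp: "ln (1 + M) \<ge> 0" using assms(6) by simp
  have h6: "real (card P) * ln (1 + M) \<le> (real (card V) - 1) * ln (M + 1)"
    using mult_right_mono[OF cP2 lnp] by (simp add: add.commute)
  show ?thesis using h1 h2 h3 h4 h5 h6 by simp
qed

end
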